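(* Let $F:\mathbb R^n\to\mathbb R^n$ be monotone with $\|F(z)-F(z')\|\le\ell\|z-z'\|$ and $\|\partial F(z)-\partial F(z')\|_\sigma\le\Lambda\|z-z'\|$ for all $z,z'$. Let $\eta>0$, let $z^{(-1)},z^{(0)}\in\mathbb R^n$, let $z^{(t+1)}=z^{(t)}-2\eta F(z^{(t)})+\eta F(z^{(t-1)})$ for $t\ge0$, and set $w^{(t)}:=z^{(t)}+\eta F(z^{(t-1)})$, $$A^{(t)}:=\int_0^1\partial F\big(w^{(t)}-(1-\alpha)\eta F(z^{(t)})\big)\,d\alpha,\qquad B^{(t)}:=\int_0^1\partial F\big(w^{(t)}-(1-\alpha)\eta F(z^{(t-1)})\big)\,d\alpha.$$ Then for each $t\ge0$: $A^{(t)}+(A^{(t)})^\top$ and $B^{(t)}+(B^{(t)})^\top$ are positive semidefinite; $\|A^{(t)}\|_\sigma\le\ell$, $\|B^{(t)}\|_\sigma\le\ell$; and $$\|A^{(t)}-B^{(t)}\|_\sigma\le\tfrac{\eta\Lambda}{2}\|F(z^{(t)})-F(z^{(t-1)})\|,$$ $$\|A^{(t)}-A^{(t+1)}\|_\sigma\le\Lambda\|w^{(t)}-w^{(t+1)}\|+\tfrac{\eta\Lambda}{2}\|F(z^{(t)})-F(z^{(t+1)})\|,$$ $$\|B^{(t)}-B^{(t+1)}\|_\sigma\le\Lambda\|w^{(t)}-w^{(t+1)}\|+\tfrac{\eta\Lambda}{2}\|F(z^{(t-1)})-F(z^{(t)})\|.$$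
   Context: $F$ monotone means $\langle F(z')-F(z),z'-z\rangle\ge0$ for all $z,z'$. $\partial F$ denotes the Jacobian of $F$, $\|\cdot\|_\sigma$ the spectral norm; integrals of matrices are entrywise. *)

theory Defs
  imports "HOL-Analysis.Analysis"
begin

definition spec_norm :: "real^'n^'m \<Rightarrow> real" where
  "spec_norm A = onorm (\<lambda>x. A *v x)"

definition psd :: "real^'n^'n \<Rightarrow> bool" where
  "psd M \<longleftrightarrow> (\<forall>x. 0 \<le> x \<bullet> (M *v x))"

definition mat_integral01 :: "(real \<Rightarrow> real^'n^'m) \<Rightarrow> real^'n^'m" where
  "mat_integral01 f = (\<chi> i j. integral {0..1} (\<lambda>a. f a $ i $ j))"

end

theory Submission imports Defs begin

lemma entry_le_spec: "\<bar>(M::real^'n^'m) $ i $ j\<bar> \<le> spec_norm M"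
proof -
  have vax: "(M *v axis j 1) $ i = M $ i $ j"
    by (metis cart_eq_inner_axis matrix_vector_mul_component)
  have "\<bar>(M *v axis j 1) $ i\<bar> \<le> norm (M *v axis j 1)" by (rule component_le_norm_cart)
  also have "\<dots> \<le> spec_norm M * norm (axis j (1::real))"
    unfolding spec_norm_def by (rule onorm) simp
  finally show ?thesis using vax by simp
qed

lemma spec_norm_nonneg: "0 \<le> spec_norm (M::real^'n^'m)"
  unfolding spec_norm_def by (rule onorm_pos_le) simp

lemma spec_norm_mv: "norm ((M::real^'n^'m) *v x) \<le> spec_norm M * norm x"
  unfolding spec_norm_def by (rule onorm) simp

lemma deriv_le:
  fixes f :: "real \<Rightarrow> real"
  assumes d: "(f has_real_derivative l) (at 0)" and b: "\<And>t. t > 0 \<Longrightarrow> f t - f 0 \<le> c * t"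
  shows "l \<le> c"
proof (rule ccontr)
  assume "\<not> l \<le> c"
  have "((\<lambda>t. f t - c * t) has_real_derivative (l - c)) (at 0)"
    using d by (auto intro!: derivative_eq_intros)
  from DERIV_pos_inc_right[OF this] \<open>\<not> l \<le> c\<close> obtain d where "d > 0"
    and h: "\<forall>h>0. h < d \<longrightarrow> f 0 - c * 0 < f (0 + h) - c * (0 + h)" by auto
  have "f 0 < f (d/2) - c * (d/2)" using h[rule_format, of "d/2"] \<open>d > 0\<close> by simp
  with b[of "d/2"] \<open>d > 0\<close> show False by auto
qed

lemma int_lin: "((\<lambda>a::real. c0 + c1 * (1 - a)) has_integral (c0 + c1 / 2)) {0..1}"
proof -
  have "((\<lambda>a::real. c0 + c1 * (1 - a)) has_integral ((\<lambda>a. c0 * a + c1 * (a - a^2/2)) 1 - (\<lambda>a. c0 * a + c1 * (a - a^2/2)) 0)) {0..1}"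
    by (rule fundamental_theorem_of_calculus) (auto intro!: derivative_eq_intros simp: power2_eq_square algebra_simps)
  then show ?thesis by simp
qed


lemma mv_cont:
  fixes f :: "real \<Rightarrow> real^'n^'m"
  assumes C: "\<And>i j. continuous_on {0..1} (\<lambda>a. f a $ i $ j)"
  shows "continuous_on {0..1} (\<lambda>a. f a *v x)"
proof -
  have e: "(\<lambda>a. f a *v x) = (\<lambda>a. \<chi> i. \<Sum>j\<in>UNIV. f a $ i $ j * x $ j)"
    by (simp add: matrix_vector_mult_def)
  show ?thesis unfolding e
    by (intro continuous_on_vec_lambda continuous_intros C)
qed

lemma mat_int_mv:
  fixes f :: "real \<Rightarrow> real^'n^'m"
  assumes C: "\<And>i j. continuous_on {0..1} (\<lambda>a. f a $ i $ j)"
  shows "((\<lambda>a. f a *v x) has_integral (mat_integral01 f *v x)) {0..1}"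
proof -
  have I: "(\<lambda>a. f a *v x) integrable_on {0..1}"
    using mv_cont[OF C] by (rule integrable_continuous_interval)
  have Iij: "(\<lambda>a. f a $ i $ j) integrable_on {0..1}" for i j
    using C by (rule integrable_continuous_interval)
  have "integral {0..1} (\<lambda>a. f a *v x) = mat_integral01 f *v x"
  proof (subst vec_eq_iff, intro allI)
    fix i
    have "integral {0..1} (\<lambda>a. f a *v x) $ i = integral {0..1} (\<lambda>a. (f a *v x) $ i)"
      using integral_component_eq_cart[OF I] by simp
    also have "\<dots> = integral {0..1} (\<lambda>a. \<Sum>j\<in>UNIV. f a $ i $ j * x $ j)"
      by (simp add: matrix_vector_mult_def)
    also have "\<dots> = (\<Sum>j\<in>UNIV. integral {0..1} (\<lambda>a. f a $ i $ j * x $ j))"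
      by (rule integral_sum) (auto intro: integrable_on_mult_left Iij)
    also have "\<dots> = (\<Sum>j\<in>UNIV. integral {0..1} (\<lambda>a. f a $ i $ j) * x $ j)"
      by simp
    also have "\<dots> = (mat_integral01 f *v x) $ i"
      by (simp add: matrix_vector_mult_def mat_integral01_def)
    finally show "integral {0..1} (\<lambda>a. f a *v x) $ i = (mat_integral01 f *v x) $ i" .
  qed
  then show ?thesis using I by (metis has_integral_integral)
qed

lemma mat_int_spec:
  fixes f :: "real \<Rightarrow> real^'n^'m" and h :: "real \<Rightarrow> real"
  assumes C: "\<And>i j. continuous_on {0..1} (\<lambda>a. f a $ i $ j)"
    and H: "continuous_on {0..1} h"
    and B: "\<And>a::real. a \<in> {0..1} \<Longrightarrow> spec_norm (f a) \<le> h a"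
  shows "spec_norm (mat_integral01 f) \<le> integral {0..1} h"
  unfolding spec_norm_def
proof (rule onorm_le)
  fix x :: "real^'n"
  have hi: "h integrable_on {0..1}" using H by (rule integrable_continuous_interval)
  have "norm (mat_integral01 f *v x) = norm (integral {0..1} (\<lambda>a. f a *v x))"
    using mat_int_mv[OF C, of x] by (simp add: integral_unique)
  also have "\<dots> \<le> integral {0..1} (\<lambda>a. h a * norm x)"
  proof (rule integral_norm_bound_integral)
    show "(\<lambda>a. f a *v x) integrable_on {0..1}" using mat_int_mv[OF C, of x] by blast
    show "(\<lambda>a. h a * norm x) integrable_on {0..1}" using hi by (rule integrable_on_mult_left)
    fix a :: real assume "a \<in> {0..1}"
    have "norm (f a *v x) \<le> spec_norm (f a) * norm x" by (rule spec_norm_mv)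
    also have "\<dots> \<le> h a * norm x" using B[OF \<open>a \<in> {0..1}\<close>] by (simp add: mult_right_mono)
    finally show "norm (f a *v x) \<le> h a * norm x" .
  qed
  also have "\<dots> = integral {0..1} h * norm x" by simp
  finally show "norm (mat_integral01 f *v x) \<le> integral {0..1} h * norm x" .
qed

lemma psd_sym: "x \<bullet> ((N + transpose N) *v x) = 2 * (x \<bullet> (N *v x))" for N :: "real^'n^'n"
proof -
  have "x \<bullet> (transpose N *v x) = x \<bullet> (N *v x)"
    by (metis dot_lmul_matrix inner_commute transpose_matrix_vector)
  then show ?thesis by (simp add: matrix_vector_mult_add_rdistrib inner_add_right)
qed

lemma mat_int_psd:
  fixes f :: "real \<Rightarrow> real^'n^'n"
  assumes C: "\<And>i j. continuous_on {0..1} (\<lambda>a. f a $ i $ j)"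
    and P: "\<And>(a::real) x. a \<in> {0..1} \<Longrightarrow> 0 \<le> x \<bullet> (f a *v x)"
  shows "psd (mat_integral01 f + transpose (mat_integral01 f))"
  unfolding psd_def psd_sym
proof
  fix x :: "real^'n"
  have "((\<lambda>a. x \<bullet> (f a *v x)) has_integral (x \<bullet> (mat_integral01 f *v x))) {0..1}"
    using has_integral_linear[OF mat_int_mv[OF C, of x] bounded_linear_inner_right[of x]]
    by (simp add: o_def)
  then have "0 \<le> x \<bullet> (mat_integral01 f *v x)"
    by (rule has_integral_nonneg) (rule P)
  then show "0 \<le> 2 * (x \<bullet> (mat_integral01 f *v x))" by simp
qed

lemma mat_int_diff:
  fixes f g :: "real \<Rightarrow> real^'n^'m"
  assumes C: "\<And>i j. continuous_on {0..1} (\<lambda>a. f a $ i $ j)"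
    and D: "\<And>i j. continuous_on {0..1} (\<lambda>a. g a $ i $ j)"
  shows "mat_integral01 f - mat_integral01 g = mat_integral01 (\<lambda>a. f a - g a)"
  unfolding mat_integral01_def
  by (simp add: vec_eq_iff integral_diff integrable_continuous_interval C D)


theorem lemma12:
  fixes F :: "real^'n \<Rightarrow> real^'n"
    and J :: "real^'n \<Rightarrow> real^'n^'n"
    and z :: "int \<Rightarrow> real^'n"
    and ell Lam \<eta> :: real
    and w :: "int \<Rightarrow> real^'n"
    and A B :: "int \<Rightarrow> real^'n^'n"
  assumes jac: "\<And>x. (F has_derivative (\<lambda>h. J x *v h)) (at x)"
    and mono: "\<And>x y. 0 \<le> (F y - F x) \<bullet> (y - x)"
    and lip: "\<And>x y. norm (F x - F y) \<le> ell * norm (x - y)"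
    and jlip: "\<And>x y. spec_norm (J x - J y) \<le> Lam * norm (x - y)"
    and eta: "\<eta> > 0"
    and rec: "\<And>t. t \<ge> 0 \<Longrightarrow> z (t + 1) = z t - (2 * \<eta>) *\<^sub>R F (z t) + \<eta> *\<^sub>R F (z (t - 1))"
    and w_def: "\<And>t. w t = z t + \<eta> *\<^sub>R F (z (t - 1))"
    and A_def: "\<And>t. A t = mat_integral01 (\<lambda>\<alpha>. J (w t - ((1 - \<alpha>) * \<eta>) *\<^sub>R F (z t)))"
    and B_def: "\<And>t. B t = mat_integral01 (\<lambda>\<alpha>. J (w t - ((1 - \<alpha>) * \<eta>) *\<^sub>R F (z (t - 1))))"
    and t: "t \<ge> 0"
  shows "psd (A t + transpose (A t)) \<and> psd (B t + transpose (B t))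
    \<and> spec_norm (A t) \<le> ell \<and> spec_norm (B t) \<le> ell
    \<and> spec_norm (A t - B t) \<le> \<eta> * Lam / 2 * norm (F (z t) - F (z (t - 1)))
    \<and> spec_norm (A t - A (t + 1)) \<le> Lam * norm (w t - w (t + 1)) + \<eta> * Lam / 2 * norm (F (z t) - F (z (t + 1)))
    \<and> spec_norm (B t - B (t + 1)) \<le> Lam * norm (w t - w (t + 1)) + \<eta> * Lam / 2 * norm (F (z (t - 1)) - F (z t))"
proof -
  obtain i0 :: 'n where True by simp
  have "0 \<le> spec_norm (J 0 - J (axis i0 1))" by (rule spec_norm_nonneg)
  also have "\<dots> \<le> Lam" using jlip[of 0 "axis i0 1"] by simp
  finally have Lam0: "0 \<le> Lam" .
  have "0 \<le> norm (F 0 - F (axis i0 1))" by simp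
  also have "\<dots> \<le> ell" using lip[of 0 "axis i0 1"] by simp
  finally have ell0: "0 \<le> ell" .
  have DF: "((\<lambda>s. F (p + s *\<^sub>R h) \<bullet> u) has_real_derivative ((J p *v h) \<bullet> u)) (at 0)" for p h u
  proof -
    have d1: "((\<lambda>s. p + s *\<^sub>R h) has_derivative (\<lambda>s. s *\<^sub>R h)) (at 0)"
      by (auto intro!: derivative_eq_intros)
    have d2: "(F has_derivative (\<lambda>v. J p *v v)) (at ((\<lambda>s. p + s *\<^sub>R h) 0))" using jac[of p] by simp
    have "((F \<circ> (\<lambda>s. p + s *\<^sub>R h)) has_derivative ((\<lambda>v. J p *v v) \<circ> (\<lambda>s. s *\<^sub>R h))) (at 0)"
      by (rule diff_chain_at[OF d1 d2])
    from bounded_linear.has_derivative[OF bounded_linear_inner_left[of u] this]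
    have "((\<lambda>s. F (p + s *\<^sub>R h) \<bullet> u) has_derivative (\<lambda>s. (J p *v (s *\<^sub>R h)) \<bullet> u)) (at 0)"
      by (simp add: o_def)
    moreover have "(\<lambda>s. (J p *v (s *\<^sub>R h)) \<bullet> u) = (*) ((J p *v h) \<bullet> u)"
      by (simp add: matrix_vector_mult_scaleR fun_eq_iff mult.commute)
    ultimately show ?thesis by (simp add: has_field_derivative_def)
  qed
  have JM: "0 \<le> x \<bullet> (J p *v x)" for p x
  proof -
    have "- ((J p *v x) \<bullet> x) \<le> 0"
    proof (rule deriv_le[where f = "\<lambda>s. - (F (p + s *\<^sub>R x) \<bullet> x)"])
      show "((\<lambda>s. - (F (p + s *\<^sub>R x) \<bullet> x)) has_real_derivative - ((J p *v x) \<bullet> x)) (at 0)"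
        using DF[of p x x] by (rule DERIV_minus)
      fix s :: real assume "s > 0"
      have "0 \<le> (F (p + s *\<^sub>R x) - F p) \<bullet> ((p + s *\<^sub>R x) - p)" by (rule mono)
      then have "0 \<le> s * ((F (p + s *\<^sub>R x) - F p) \<bullet> x)" by simp
      then have "0 \<le> (F (p + s *\<^sub>R x) - F p) \<bullet> x" using \<open>s > 0\<close> by (simp add: zero_le_mult_iff)
      then show "- (F (p + s *\<^sub>R x) \<bullet> x) - - (F (p + 0 *\<^sub>R x) \<bullet> x) \<le> 0 * s"
        by (simp add: inner_diff_left)
    qed
    then show ?thesis by (simp add: inner_commute)
  qed
  have JN: "spec_norm (J p) \<le> ell" for p
    unfolding spec_norm_def
  proof (rule onorm_le)
    fix h
    define u where "u = J p *v h"
    have "(J p *v h) \<bullet> u \<le> ell * norm h * norm u"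
    proof (rule deriv_le[OF DF[of p h u]])
      fix s :: real assume "s > 0"
      have "F (p + s *\<^sub>R h) \<bullet> u - F (p + 0 *\<^sub>R h) \<bullet> u = (F (p + s *\<^sub>R h) - F p) \<bullet> u"
        by (simp add: inner_diff_left)
      also have "\<dots> \<le> norm (F (p + s *\<^sub>R h) - F p) * norm u" by (rule norm_cauchy_schwarz)
      also have "\<dots> \<le> (ell * norm ((p + s *\<^sub>R h) - p)) * norm u"
        by (rule mult_right_mono[OF lip]) simp
      also have "\<dots> = ell * norm h * norm u * s" using \<open>s > 0\<close> by simp
      finally show "F (p + s *\<^sub>R h) \<bullet> u - F (p + 0 *\<^sub>R h) \<bullet> u \<le> ell * norm h * norm u * s" .
    qed
    then have "norm u * norm u \<le> (ell * norm h) * norm u"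
      by (simp add: u_def power2_eq_square[symmetric] dot_square_norm)
    then show "norm (J p *v h) \<le> ell * norm h"
      using ell0 unfolding u_def[symmetric]
      by (cases "norm u = 0") (auto simp: mult_le_cancel_right)
  qed
  have Jent: "continuous_on UNIV (\<lambda>x. J x $ i $ j)" for i j
  proof (rule lipschitz_on_continuous_on)
    show "Lam-lipschitz_on UNIV (\<lambda>x. J x $ i $ j)"
    proof (rule lipschitz_onI[OF _ Lam0])
      fix x y :: "real^'n"
      have "dist (J x $ i $ j) (J y $ i $ j) = \<bar>(J x - J y) $ i $ j\<bar>" by (simp add: dist_real_def)
      also have "\<dots> \<le> spec_norm (J x - J y)" by (rule entry_le_spec)
      also have "\<dots> \<le> Lam * dist x y" using jlip by (simp add: dist_norm)
      finally show "dist (J x $ i $ j) (J y $ i $ j) \<le> Lam * dist x y" .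
    qed
  qed
  have Cc: "continuous_on {0..1} (\<lambda>a. J (p - ((1 - a) * \<eta>) *\<^sub>R q) $ i $ j)" for p q i j
    by (rule continuous_on_compose2[OF Jent[of i j]]) (auto intro!: continuous_intros)
  have Cd: "continuous_on {0..1} (\<lambda>a. (J (p - ((1 - a) * \<eta>) *\<^sub>R q) - J (p' - ((1 - a) * \<eta>) *\<^sub>R q')) $ i $ j)"
    for p q p' q' i j
    by (simp only: vector_minus_component) (intro continuous_on_diff Cc)
  have intc: "integral {0..1} (\<lambda>a::real. c0 + c1 * (1 - a)) = c0 + c1 / 2" for c0 c1
    using int_lin by (rule integral_unique)
  have contc: "continuous_on {0..1} (\<lambda>a::real. c0 + c1 * (1 - a))" for c0 c1
    by (intro continuous_intros)
  have gen: "spec_norm (mat_integral01 (\<lambda>a. J (p - ((1 - a) * \<eta>) *\<^sub>R q)) - mat_integral01 (\<lambda>a. J (p' - ((1 - a) * \<eta>) *\<^sub>R q')))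
      \<le> Lam * norm (p - p') + \<eta> * Lam / 2 * norm (q - q')" for p q p' q'
  proof -
    have "spec_norm (mat_integral01 (\<lambda>a. J (p - ((1 - a) * \<eta>) *\<^sub>R q)) - mat_integral01 (\<lambda>a. J (p' - ((1 - a) * \<eta>) *\<^sub>R q')))
       = spec_norm (mat_integral01 (\<lambda>a. J (p - ((1 - a) * \<eta>) *\<^sub>R q) - J (p' - ((1 - a) * \<eta>) *\<^sub>R q')))"
      by (subst mat_int_diff) (auto intro: Cc)
    also have "\<dots> \<le> integral {0..1} (\<lambda>a::real. Lam * norm (p - p') + (Lam * \<eta> * norm (q - q')) * (1 - a))"
    proof (rule mat_int_spec[OF Cd contc])
      fix a :: real assume a: "a \<in> {0..1}"
      have j1: "spec_norm (J (p - ((1 - a) * \<eta>) *\<^sub>R q) - J (p' - ((1 - a) * \<eta>) *\<^sub>R q'))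
          \<le> Lam * norm ((p - ((1 - a) * \<eta>) *\<^sub>R q) - (p' - ((1 - a) * \<eta>) *\<^sub>R q'))" by (rule jlip)
      have "norm ((p - ((1 - a) * \<eta>) *\<^sub>R q) - (p' - ((1 - a) * \<eta>) *\<^sub>R q'))
          = norm ((p - p') - ((1 - a) * \<eta>) *\<^sub>R (q - q'))" by (simp add: algebra_simps)
      also have "\<dots> \<le> norm (p - p') + norm (((1 - a) * \<eta>) *\<^sub>R (q - q'))" by (rule norm_triangle_ineq4)
      also have "norm (((1 - a) * \<eta>) *\<^sub>R (q - q')) = (1 - a) * \<eta> * norm (q - q')"
        using a eta by simp
      finally have j2: "norm ((p - ((1 - a) * \<eta>) *\<^sub>R q) - (p' - ((1 - a) * \<eta>) *\<^sub>R q'))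
          \<le> norm (p - p') + (1 - a) * \<eta> * norm (q - q')" .
      have "Lam * norm ((p - ((1 - a) * \<eta>) *\<^sub>R q) - (p' - ((1 - a) * \<eta>) *\<^sub>R q'))
          \<le> Lam * (norm (p - p') + (1 - a) * \<eta> * norm (q - q'))"
        using j2 Lam0 by (rule mult_left_mono)
      also have "\<dots> = Lam * norm (p - p') + (Lam * \<eta> * norm (q - q')) * (1 - a)"
        by (simp add: algebra_simps)
      finally show "spec_norm (J (p - ((1 - a) * \<eta>) *\<^sub>R q) - J (p' - ((1 - a) * \<eta>) *\<^sub>R q'))
          \<le> Lam * norm (p - p') + (Lam * \<eta> * norm (q - q')) * (1 - a)"
        using j1 by linarith
    qed
    also have "\<dots> = Lam * norm (p - p') + \<eta> * Lam / 2 * norm (q - q')"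
      by (simp add: intc)
    finally show ?thesis .
  qed
  have psdA: "psd (A t + transpose (A t))"
    unfolding A_def by (rule mat_int_psd[OF Cc JM])
  have psdB: "psd (B t + transpose (B t))"
    unfolding B_def by (rule mat_int_psd[OF Cc JM])
  have nA: "spec_norm (A t) \<le> ell"
    using mat_int_spec[OF Cc contc[of ell 0], of "w t" "F (z t)"] JN unfolding A_def by (simp add: intc)
  have nB: "spec_norm (B t) \<le> ell"
    using mat_int_spec[OF Cc contc[of ell 0], of "w t" "F (z (t - 1))"] JN unfolding B_def by (simp add: intc)
  have AB: "spec_norm (A t - B t) \<le> \<eta> * Lam / 2 * norm (F (z t) - F (z (t - 1)))"
    using gen[of "w t" "F (z t)" "w t" "F (z (t - 1))"] unfolding A_def B_def by simp
  have AA: "spec_norm (A t - A (t + 1)) \<le> Lam * norm (w t - w (t + 1)) + \<eta> * Lam / 2 * norm (F (z t) - F (z (t + 1)))"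
    using gen[of "w t" "F (z t)" "w (t + 1)" "F (z (t + 1))"] unfolding A_def by simp
  have BB: "spec_norm (B t - B (t + 1)) \<le> Lam * norm (w t - w (t + 1)) + \<eta> * Lam / 2 * norm (F (z (t - 1)) - F (z t))"
    using gen[of "w t" "F (z (t - 1))" "w (t + 1)" "F (z t)"] unfolding B_def by simp
  show ?thesis using psdA psdB nA nB AB AA BB by blast
qed

end
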